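(* Let $G$ be a nonabelian group and let $\psi_1,\dots,\psi_t\in\operatorname{End}(G)$ satisfy $\psi_i([G,G])\le Z(G)$ for all $i$ and $[\psi_i(G),\psi_j(G)]\subseteq Z(G)$ for all $1\le i,j\le t$. Fix $1\le i,j\le t$ and $\alpha,\beta\in\mathscr{E}$, and write $\circ_i=\circ_{\psi_i,\alpha}$, $\circ_j=\circ_{\psi_j,\beta}$. For $g\in G$ let $\widetilde g$ be the inverse of $g$ in $(G,\circ_i)$ and $\overline g$ the inverse of $g$ in $(G,\circ_j)$. Then \[R(g,h)=\Big(\widetilde g\circ_i(g\circ_j h),\ \overline{\widetilde g\circ_i(g\circ_j h)}\circ_j g\circ_j h\Big),\qquad R'(g,h)=\Big((g\circ_j h)\circ_i\widetilde g,\ \overline{(g\circ_j h)\circ_i\widetilde g}\circ_j g\circ_j h\Big)\] are mutually inverse non-degenerate set-theoretic solutions to the Yang–Baxter equation on $G$. Furthermore, $R$ is involutive (and hence $R'=R$) if and only if $(G,\circ_i)$ is abelian.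
   Context: $Z(G)$ is the center and $[G,G]$ the commutator subgroup. $\mathscr{E}$ denotes the set of formal expressions $\alpha=n_1\phi_1+\cdots+n_s\phi_s$ with $n_k\in\mathbb Z$, $\phi_k\in\operatorname{End}(G)$ (free group on $\operatorname{End}(G)$, written additively), acting on $G$ by $\alpha(g)=\phi_1(g^{n_1})\cdots\phi_s(g^{n_s})$. For $\psi\in\operatorname{End}(G)$ and $\alpha\in\mathscr{E}$, $g\circ_{\psi,\alpha}h=g\,\psi(\alpha(g))\,h\,\psi(\alpha(g))^{-1}$; these are group operations on $G$. A set-theoretic solution to the Yang–Baxter equation on a set $X$ is a map $R:X\times X\to X\times X$ with $(R\times\mathrm{id})(\mathrm{id}\times R)(R\times\mathrm{id})=(\mathrm{id}\times R)(R\times\mathrm{id})(\mathrm{id}\times R)$ on $X^3$; it is non-degenerate if, writing $R(x,y)=(\sigma_x(y),\tau_y(x))$, all maps $\sigma_x$ and $\tau_y$ are bijections; it is involutive if $R^2=\mathrm{id}$. *)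

theory Defs
  imports "HOL-Algebra.Algebra"
begin

definition center :: "('a, 'b) monoid_scheme \<Rightarrow> 'a set" where
  "center G = {z \<in> carrier G. \<forall>g \<in> carrier G. z \<otimes>\<^bsub>G\<^esub> g = g \<otimes>\<^bsub>G\<^esub> z}"

text \<open>Commutator [a,b] = a b a^-1 b^-1 (same convention as derived_set).\<close>
definition commut :: "('a, 'b) monoid_scheme \<Rightarrow> 'a \<Rightarrow> 'a \<Rightarrow> 'a" where
  "commut G a b = a \<otimes>\<^bsub>G\<^esub> b \<otimes>\<^bsub>G\<^esub> inv\<^bsub>G\<^esub> a \<otimes>\<^bsub>G\<^esub> inv\<^bsub>G\<^esub> b"

text \<open>Formal expressions n_1 phi_1 + ... + n_s phi_s, represented by lists of pairs (n_k, phi_k)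
  with each phi_k an endomorphism of G.\<close>
definition exprs :: "('a, 'b) monoid_scheme \<Rightarrow> (int \<times> ('a \<Rightarrow> 'a)) list set" where
  "exprs G = {\<alpha>. \<forall>p \<in> set \<alpha>. snd p \<in> hom G G}"

fun expr_app :: "('a, 'b) monoid_scheme \<Rightarrow> (int \<times> ('a \<Rightarrow> 'a)) list \<Rightarrow> 'a \<Rightarrow> 'a" where
  "expr_app G [] g = \<one>\<^bsub>G\<^esub>"
| "expr_app G ((n, \<phi>) # \<alpha>) g = \<phi> (g [^]\<^bsub>G\<^esub> n) \<otimes>\<^bsub>G\<^esub> expr_app G \<alpha> g"

definition circ :: "('a, 'b) monoid_scheme \<Rightarrow> ('a \<Rightarrow> 'a) \<Rightarrow> (int \<times> ('a \<Rightarrow> 'a)) list \<Rightarrow> 'a \<Rightarrow> 'a \<Rightarrow> 'a" where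
  "circ G \<psi> \<alpha> g h = g \<otimes>\<^bsub>G\<^esub> \<psi> (expr_app G \<alpha> g) \<otimes>\<^bsub>G\<^esub> h \<otimes>\<^bsub>G\<^esub> inv\<^bsub>G\<^esub> (\<psi> (expr_app G \<alpha> g))"

definition circ_grp :: "('a, 'b) monoid_scheme \<Rightarrow> ('a \<Rightarrow> 'a) \<Rightarrow> (int \<times> ('a \<Rightarrow> 'a)) list \<Rightarrow> 'a monoid" where
  "circ_grp G \<psi> \<alpha> = \<lparr>carrier = carrier G, monoid.mult = circ G \<psi> \<alpha>, one = \<one>\<^bsub>G\<^esub>\<rparr>"

text \<open>R x id and id x R on triples.\<close>
definition R12 :: "('a \<times> 'a \<Rightarrow> 'a \<times> 'a) \<Rightarrow> 'a \<times> 'a \<times> 'a \<Rightarrow> 'a \<times> 'a \<times> 'a" where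
  "R12 R p = (fst (R (fst p, fst (snd p))), snd (R (fst p, fst (snd p))), snd (snd p))"

definition R23 :: "('a \<times> 'a \<Rightarrow> 'a \<times> 'a) \<Rightarrow> 'a \<times> 'a \<times> 'a \<Rightarrow> 'a \<times> 'a \<times> 'a" where
  "R23 R p = (fst p, fst (R (snd p)), snd (R (snd p)))"

definition YBE_solution :: "'a set \<Rightarrow> ('a \<times> 'a \<Rightarrow> 'a \<times> 'a) \<Rightarrow> bool" where
  "YBE_solution S R \<longleftrightarrow>
     (\<forall>x \<in> S. \<forall>y \<in> S. fst (R (x, y)) \<in> S \<and> snd (R (x, y)) \<in> S) \<and>
     (\<forall>x \<in> S. \<forall>y \<in> S. \<forall>z \<in> S.
        R12 R (R23 R (R12 R (x, y, z))) = R23 R (R12 R (R23 R (x, y, z))))"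

definition nondegenerate :: "'a set \<Rightarrow> ('a \<times> 'a \<Rightarrow> 'a \<times> 'a) \<Rightarrow> bool" where
  "nondegenerate S R \<longleftrightarrow>
     (\<forall>x \<in> S. bij_betw (\<lambda>y. fst (R (x, y))) S S) \<and>
     (\<forall>y \<in> S. bij_betw (\<lambda>x. snd (R (x, y))) S S)"

definition involutive :: "'a set \<Rightarrow> ('a \<times> 'a \<Rightarrow> 'a \<times> 'a) \<Rightarrow> bool" where
  "involutive S R \<longleftrightarrow> (\<forall>x \<in> S. \<forall>y \<in> S. R (R (x, y)) = (x, y))"

end

theory Submission
  imports Defs
begin

definition cnj :: "('a, 'b) monoid_scheme \<Rightarrow> 'a \<Rightarrow> 'a \<Rightarrow> 'a" where
  "cnj G c w = c \<otimes>\<^bsub>G\<^esub> w \<otimes>\<^bsub>G\<^esub> inv\<^bsub>G\<^esub> c"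

context group begin

lemma inv_cancel_left': "c \<in> carrier G \<Longrightarrow> r \<in> carrier G \<Longrightarrow> inv c \<otimes> (c \<otimes> r) = r"
  by (simp add: m_assoc[symmetric])
lemma inv_cancel_left'': "c \<in> carrier G \<Longrightarrow> r \<in> carrier G \<Longrightarrow> c \<otimes> (inv c \<otimes> r) = r"
  by (simp add: m_assoc[symmetric])

lemmas gsimps = m_assoc inv_cancel_left' inv_cancel_left'' inv_mult_group

lemma cnj_closed[simp]: "c \<in> carrier G \<Longrightarrow> w \<in> carrier G \<Longrightarrow> cnj G c w \<in> carrier G"
  by (simp add: cnj_def)

lemma cnj_mult: "c \<in> carrier G \<Longrightarrow> x \<in> carrier G \<Longrightarrow> y \<in> carrier G \<Longrightarrow>
   cnj G c (x \<otimes> y) = cnj G c x \<otimes> cnj G c y"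
  by (simp add: cnj_def gsimps)

lemma cnj_inv: "c \<in> carrier G \<Longrightarrow> x \<in> carrier G \<Longrightarrow> cnj G c (inv x) = inv (cnj G c x)"
  by (simp add: cnj_def gsimps)

lemma cnj_comp: "c \<in> carrier G \<Longrightarrow> d \<in> carrier G \<Longrightarrow> w \<in> carrier G \<Longrightarrow>
   cnj G (c \<otimes> d) w = cnj G c (cnj G d w)"
  by (simp add: cnj_def gsimps)

lemma cnj_one[simp]: "w \<in> carrier G \<Longrightarrow> cnj G \<one> w = w"
  by (simp add: cnj_def)

lemma cnj_cancel: "c \<in> carrier G \<Longrightarrow> w \<in> carrier G \<Longrightarrow> cnj G c (cnj G (inv c) w) = w"
  by (simp add: cnj_def gsimps)
lemma cnj_cancel2: "c \<in> carrier G \<Longrightarrow> w \<in> carrier G \<Longrightarrow> cnj G (inv c) (cnj G c w) = w"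
  by (simp add: cnj_def gsimps)

lemma center_carrier: "z \<in> center G \<Longrightarrow> z \<in> carrier G"
  by (simp add: center_def)

lemma cnj_central: "z \<in> center G \<Longrightarrow> c \<in> carrier G \<Longrightarrow> w \<in> carrier G \<Longrightarrow>
   cnj G (z \<otimes> c) w = cnj G c w"
proof -
  assume z: "z \<in> center G" and c: "c \<in> carrier G" and w: "w \<in> carrier G"
  have zc: "z \<in> carrier G" using z by (simp add: center_def)
  have "cnj G (z \<otimes> c) w = z \<otimes> (c \<otimes> w \<otimes> inv c) \<otimes> inv z"
    using zc c w by (simp add: cnj_def gsimps)
  also have "\<dots> = (c \<otimes> w \<otimes> inv c) \<otimes> z \<otimes> inv z"
    using z c w by (simp add: center_def)
  also have "\<dots> = cnj G c w" using zc c w by (simp add: cnj_def gsimps)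
  finally show ?thesis .
qed

lemma cnj_commute:
  assumes p: "p \<in> carrier G" and q: "q \<in> carrier G" and w: "w \<in> carrier G"
    and cm: "commut G p q \<in> center G"
  shows "cnj G p (cnj G q w) = cnj G q (cnj G p w)"
proof -
  let ?z = "commut G p q"
  have zc: "?z \<in> carrier G" using cm by (simp add: center_def)
  have "?z \<otimes> (q \<otimes> p) = p \<otimes> q"
    using p q by (simp add: commut_def gsimps)
  hence "cnj G p (cnj G q w) = cnj G (?z \<otimes> (q \<otimes> p)) w"
    using p q w by (simp add: cnj_comp)
  also have "\<dots> = cnj G (q \<otimes> p) w" using cnj_central[OF cm] p q w by simp
  also have "\<dots> = cnj G q (cnj G p w)" using p q w by (simp add: cnj_comp)
  finally show ?thesis .
qed

end

lemma (in comm_group) swap4: "a \<in> carrier G \<Longrightarrow> b \<in> carrier G \<Longrightarrow> c \<in> carrier G \<Longrightarrow> d \<in> carrier G \<Longrightarrow>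
  (a \<otimes> b) \<otimes> (c \<otimes> d) = (a \<otimes> c) \<otimes> (b \<otimes> d)"
  by (simp add: m_ac)

context group begin

lemma expr_closed:
  "\<alpha> \<in> exprs G \<Longrightarrow> x \<in> carrier G \<Longrightarrow> expr_app G \<alpha> x \<in> carrier G"
proof (induction \<alpha>)
  case Nil then show ?case by simp
next
  case (Cons p \<alpha>)
  obtain n \<phi> where p: "p = (n, \<phi>)" by fastforce
  have h: "\<phi> \<in> hom G G" and a: "\<alpha> \<in> exprs G" using Cons.prems p by (auto simp: exprs_def)
  have "\<phi> (x [^] n) \<in> carrier G" using h Cons.prems by (simp add: hom_in_carrier)
  then show ?case using Cons.IH[OF a Cons.prems(2)] p by simp
qed

lemma expr_one: "\<alpha> \<in> exprs G \<Longrightarrow> expr_app G \<alpha> \<one> = \<one>"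
proof (induction \<alpha>)
  case Nil then show ?case by simp
next
  case (Cons p \<alpha>)
  obtain n \<phi> where p: "p = (n, \<phi>)" by fastforce
  have h: "\<phi> \<in> hom G G" and a: "\<alpha> \<in> exprs G" using Cons.prems p by (auto simp: exprs_def)
  have "\<phi> \<one> = \<one>" using h by (simp add: hom_one is_group)
  then show ?case using Cons.IH[OF a] p by simp
qed

abbreviation "DK \<equiv> derived G (carrier G)"

lemma DK_normal: "DK \<lhd> G" by (rule derived_self_is_normal)

lemma expr_mult_quot:
  assumes "\<alpha> \<in> exprs G" "x \<in> carrier G" "y \<in> carrier G"
  shows "DK #> expr_app G \<alpha> (x \<otimes> y) = (DK #> expr_app G \<alpha> x) \<otimes>\<^bsub>G Mod DK\<^esub> (DK #> expr_app G \<alpha> y)"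
  using assms
proof (induction \<alpha>)
  case Nil
  interpret N: normal DK G by (rule DK_normal)
  have "DK #> \<one> = (DK #> \<one>) \<otimes>\<^bsub>G Mod DK\<^esub> (DK #> \<one>)"
    using N.rcos_sum by (simp add: FactGroup_def)
  then show ?case by simp
next
  case (Cons p \<alpha>)
  interpret N: normal DK G by (rule DK_normal)
  interpret Q: comm_group "G Mod DK" by (rule derived_quot_is_comm_group)
  obtain n \<phi> where p: "p = (n, \<phi>)" by fastforce
  have h: "\<phi> \<in> hom G G" and a: "\<alpha> \<in> exprs G" using Cons.prems p by (auto simp: exprs_def)
  let ?\<pi> = "\<lambda>a. DK #> a"
  have pih: "?\<pi> \<in> hom G (G Mod DK)" by (rule N.r_coset_hom_Mod)
  have ch: "(\<lambda>a. ?\<pi> (\<phi> a)) \<in> hom G (G Mod DK)"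
    using h pih unfolding hom_def by (auto simp: Pi_def)
  have x: "x \<in> carrier G" and y: "y \<in> carrier G" using Cons.prems by auto
  have pimul: "\<And>a b. a \<in> carrier G \<Longrightarrow> b \<in> carrier G \<Longrightarrow> ?\<pi> (a \<otimes> b) = ?\<pi> a \<otimes>\<^bsub>G Mod DK\<^esub> ?\<pi> b"
    using pih by (simp add: hom_mult)
  have picl: "\<And>a. a \<in> carrier G \<Longrightarrow> ?\<pi> a \<in> carrier (G Mod DK)"
    using pih by (simp add: hom_in_carrier)
  have phicl: "\<And>a. a \<in> carrier G \<Longrightarrow> \<phi> a \<in> carrier G" using h by (simp add: hom_in_carrier)
  define Xq where "Xq = ?\<pi> (\<phi> x)"
  define Yq where "Yq = ?\<pi> (\<phi> y)"
  define Aq where "Aq = ?\<pi> (expr_app G \<alpha> x)"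
  define Bq where "Bq = ?\<pi> (expr_app G \<alpha> y)"
  have XY: "Xq \<in> carrier (G Mod DK)" "Yq \<in> carrier (G Mod DK)" "Aq \<in> carrier (G Mod DK)" "Bq \<in> carrier (G Mod DK)"
    unfolding Xq_def Yq_def Aq_def Bq_def using picl phicl expr_closed a x y by auto
  have e1: "?\<pi> (\<phi> ((x \<otimes> y) [^] n)) = (Xq \<otimes>\<^bsub>G Mod DK\<^esub> Yq) [^]\<^bsub>G Mod DK\<^esub> n"
  proof -
    have "?\<pi> (\<phi> ((x \<otimes> y) [^] n)) = (?\<pi> (\<phi> (x \<otimes> y))) [^]\<^bsub>G Mod DK\<^esub> n"
      using hom_int_pow[OF ch, of "x \<otimes> y" n] x y is_group Q.is_group by simp
    also have "?\<pi> (\<phi> (x \<otimes> y)) = Xq \<otimes>\<^bsub>G Mod DK\<^esub> Yq"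
      using h x y pimul phicl by (simp add: hom_mult Xq_def Yq_def)
    finally show ?thesis .
  qed
  have e2: "?\<pi> (\<phi> (x [^] n)) = Xq [^]\<^bsub>G Mod DK\<^esub> n"
    using hom_int_pow[OF ch, of x n] x is_group Q.is_group by (simp add: Xq_def)
  have e3: "?\<pi> (\<phi> (y [^] n)) = Yq [^]\<^bsub>G Mod DK\<^esub> n"
    using hom_int_pow[OF ch, of y n] y is_group Q.is_group by (simp add: Yq_def)
  have IH: "?\<pi> (expr_app G \<alpha> (x \<otimes> y)) = Aq \<otimes>\<^bsub>G Mod DK\<^esub> Bq"
    using Cons.IH[OF a x y] by (simp add: Aq_def Bq_def)
  have "?\<pi> (expr_app G (p # \<alpha>) (x \<otimes> y)) = ?\<pi> (\<phi> ((x \<otimes> y) [^] n)) \<otimes>\<^bsub>G Mod DK\<^esub> ?\<pi> (expr_app G \<alpha> (x \<otimes> y))"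
    using p pimul phicl expr_closed a x y by simp
  also have "\<dots> = ((Xq \<otimes>\<^bsub>G Mod DK\<^esub> Yq) [^]\<^bsub>G Mod DK\<^esub> n) \<otimes>\<^bsub>G Mod DK\<^esub> (Aq \<otimes>\<^bsub>G Mod DK\<^esub> Bq)"
    using e1 IH by simp
  also have "\<dots> = ((Xq [^]\<^bsub>G Mod DK\<^esub> n) \<otimes>\<^bsub>G Mod DK\<^esub> Aq) \<otimes>\<^bsub>G Mod DK\<^esub> ((Yq [^]\<^bsub>G Mod DK\<^esub> n) \<otimes>\<^bsub>G Mod DK\<^esub> Bq)"
    using XY Q.swap4[of "Xq [^]\<^bsub>G Mod DK\<^esub> n" "Yq [^]\<^bsub>G Mod DK\<^esub> n" Aq Bq]
    by (simp only: Q.int_pow_distrib Q.int_pow_closed)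
  also have "\<dots> = ?\<pi> (expr_app G (p # \<alpha>) x) \<otimes>\<^bsub>G Mod DK\<^esub> ?\<pi> (expr_app G (p # \<alpha>) y)"
    using p pimul phicl expr_closed a x y e2 e3 by (simp add: Aq_def Bq_def)
  finally show ?case .
qed

lemma expr_mult_mod:
  assumes "\<alpha> \<in> exprs G" "x \<in> carrier G" "y \<in> carrier G"
  shows "\<exists>k \<in> DK. expr_app G \<alpha> (x \<otimes> y) = k \<otimes> (expr_app G \<alpha> x \<otimes> expr_app G \<alpha> y)"
proof -
  interpret N: normal DK G by (rule DK_normal)
  have pih: "(\<lambda>a. DK #> a) \<in> hom G (G Mod DK)" by (rule N.r_coset_hom_Mod)
  let ?A = "expr_app G \<alpha> (x \<otimes> y)" and ?B = "expr_app G \<alpha> x \<otimes> expr_app G \<alpha> y"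
  have cl: "?A \<in> carrier G" "?B \<in> carrier G" using expr_closed assms by auto
  have "DK #> ?B = DK #> ?A"
    using expr_mult_quot[OF assms] pih expr_closed assms by (simp add: hom_mult)
  hence "?A \<in> DK #> ?B" using repr_independenceD[OF N.subgroup_axioms cl(1)] by simp
  then show ?thesis by (auto simp: r_coset_def)
qed

end

lemma (in group) cnj_one_right[simp]: "c \<in> carrier G \<Longrightarrow> cnj G c \<one> = \<one>"
  by (simp add: cnj_def)

lemma circ_grp_simps[simp]:
  "carrier (circ_grp G \<psi> \<alpha>) = carrier G"
  "monoid.mult (circ_grp G \<psi> \<alpha>) = circ G \<psi> \<alpha>"
  "one (circ_grp G \<psi> \<alpha>) = \<one>\<^bsub>G\<^esub>"
  by (simp_all add: circ_grp_def)

locale endo = group G for G :: "('a, 'b) monoid_scheme" (structure) +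
  fixes \<psi> :: "'a \<Rightarrow> 'a" and \<alpha> :: "(int \<times> ('a \<Rightarrow> 'a)) list"
  assumes psi_hom: "\<psi> \<in> hom G G"
    and psi_der: "\<psi> ` derived G (carrier G) \<subseteq> center G"
    and psi_comm: "\<forall>a\<in>carrier G. \<forall>b\<in>carrier G. commut G (\<psi> a) (\<psi> b) \<in> center G"
    and alpha: "\<alpha> \<in> exprs G"
begin

abbreviation fe where "fe g \<equiv> \<psi> (expr_app G \<alpha> g)"

lemma fe_closed[simp]: "x \<in> carrier G \<Longrightarrow> fe x \<in> carrier G"
  using psi_hom expr_closed[OF alpha] by (simp add: hom_in_carrier)

lemma fe_one[simp]: "fe \<one> = \<one>"
  using psi_hom expr_one[OF alpha] by (simp add: hom_one is_group)

lemma cnj_fe_mult: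
  assumes x: "x \<in> carrier G" and y: "y \<in> carrier G" and w: "w \<in> carrier G"
  shows "cnj G (fe (x \<otimes> y)) w = cnj G (fe x) (cnj G (fe y) w)"
proof -
  obtain k where k: "k \<in> DK" and e: "expr_app G \<alpha> (x \<otimes> y) = k \<otimes> (expr_app G \<alpha> x \<otimes> expr_app G \<alpha> y)"
    using expr_mult_mod[OF alpha x y] by blast
  have kc: "k \<in> carrier G" using k derived_in_carrier[of "carrier G"] by blast
  have ec: "expr_app G \<alpha> x \<in> carrier G" "expr_app G \<alpha> y \<in> carrier G" using expr_closed[OF alpha] x y by auto
  have "fe (x \<otimes> y) = \<psi> k \<otimes> (fe x \<otimes> fe y)"
    using e psi_hom kc ec by (simp add: hom_mult)
  moreover have "\<psi> k \<in> center G" using psi_der k by blast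
  ultimately show ?thesis using cnj_central x y w by (simp add: cnj_comp)
qed

lemma fe_comm:
  assumes x: "x \<in> carrier G" and y: "y \<in> carrier G" and w: "w \<in> carrier G"
  shows "cnj G (fe x) (cnj G (fe y) w) = cnj G (fe y) (cnj G (fe x) w)"
  using cnj_commute[of "fe x" "fe y" w] psi_comm expr_closed[OF alpha] x y w by simp

lemma cnj_fe_inv1:
  assumes x: "x \<in> carrier G" and w: "w \<in> carrier G"
  shows "cnj G (fe (inv x)) (cnj G (fe x) w) = w"
  using cnj_fe_mult[of "inv x" x w] x w by simp

lemma cnj_fe_inv2:
  assumes x: "x \<in> carrier G" and w: "w \<in> carrier G"
  shows "cnj G (fe x) (cnj G (fe (inv x)) w) = w"
  using cnj_fe_mult[of x "inv x" w] x w by simp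

lemma cnj_fe_cnj:
  assumes c: "c \<in> carrier G" and x: "x \<in> carrier G" and w: "w \<in> carrier G"
  shows "cnj G (fe (cnj G c x)) w = cnj G (fe x) w"
proof -
  have e: "cnj G c x = (c \<otimes> x) \<otimes> inv c" by (simp add: cnj_def)
  have "cnj G (fe (cnj G c x)) w = cnj G (fe (c \<otimes> x)) (cnj G (fe (inv c)) w)"
    unfolding e using c x w by (intro cnj_fe_mult) auto
  also have "\<dots> = cnj G (fe c) (cnj G (fe x) (cnj G (fe (inv c)) w))"
    using c x w by (simp add: cnj_fe_mult)
  also have "\<dots> = cnj G (fe x) (cnj G (fe c) (cnj G (fe (inv c)) w))"
    using c x w by (simp add: fe_comm)
  also have "\<dots> = cnj G (fe x) w" using c w by (simp add: cnj_fe_inv2)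
  finally show ?thesis .
qed

lemma circ_eq: "g \<in> carrier G \<Longrightarrow> h \<in> carrier G \<Longrightarrow> circ G \<psi> \<alpha> g h = g \<otimes> cnj G (fe g) h"
  by (simp add: circ_def cnj_def m_assoc)

lemma circ_closed: "g \<in> carrier G \<Longrightarrow> h \<in> carrier G \<Longrightarrow> circ G \<psi> \<alpha> g h \<in> carrier G"
  by (simp add: circ_eq)

lemma circ_group: "group (circ_grp G \<psi> \<alpha>)"
proof (rule groupI)
  fix x y assume "x \<in> carrier (circ_grp G \<psi> \<alpha>)" "y \<in> carrier (circ_grp G \<psi> \<alpha>)"
  then show "x \<otimes>\<^bsub>circ_grp G \<psi> \<alpha>\<^esub> y \<in> carrier (circ_grp G \<psi> \<alpha>)" by (simp add: circ_closed)
next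
  show "\<one>\<^bsub>circ_grp G \<psi> \<alpha>\<^esub> \<in> carrier (circ_grp G \<psi> \<alpha>)" by simp
next
  fix x y z assume "x \<in> carrier (circ_grp G \<psi> \<alpha>)" "y \<in> carrier (circ_grp G \<psi> \<alpha>)" "z \<in> carrier (circ_grp G \<psi> \<alpha>)"
  hence x: "x \<in> carrier G" and y: "y \<in> carrier G" and z: "z \<in> carrier G" by auto
  have "circ G \<psi> \<alpha> (circ G \<psi> \<alpha> x y) z = (x \<otimes> cnj G (fe x) y) \<otimes> cnj G (fe x) (cnj G (fe (cnj G (fe x) y)) z)"
    using x y z by (simp add: circ_eq cnj_fe_mult)
  also have "\<dots> = (x \<otimes> cnj G (fe x) y) \<otimes> cnj G (fe x) (cnj G (fe y) z)"
    using x y z by (simp add: cnj_fe_cnj)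
  also have "\<dots> = circ G \<psi> \<alpha> x (circ G \<psi> \<alpha> y z)"
    using x y z by (simp add: circ_eq cnj_mult m_assoc)
  finally show "x \<otimes>\<^bsub>circ_grp G \<psi> \<alpha>\<^esub> y \<otimes>\<^bsub>circ_grp G \<psi> \<alpha>\<^esub> z =
        x \<otimes>\<^bsub>circ_grp G \<psi> \<alpha>\<^esub> (y \<otimes>\<^bsub>circ_grp G \<psi> \<alpha>\<^esub> z)" by simp
next
  fix x assume "x \<in> carrier (circ_grp G \<psi> \<alpha>)"
  hence x: "x \<in> carrier G" by simp
  show "\<one>\<^bsub>circ_grp G \<psi> \<alpha>\<^esub> \<otimes>\<^bsub>circ_grp G \<psi> \<alpha>\<^esub> x = x" using x by (simp add: circ_eq)
next
  fix x assume "x \<in> carrier (circ_grp G \<psi> \<alpha>)"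
  hence x: "x \<in> carrier G" by simp
  let ?y = "cnj G (fe (inv x)) (inv x)"
  have e: "circ G \<psi> \<alpha> ?y x = \<one>"
    using x by (simp add: circ_eq cnj_fe_cnj cnj_mult[symmetric])
  show "\<exists>y\<in>carrier (circ_grp G \<psi> \<alpha>). y \<otimes>\<^bsub>circ_grp G \<psi> \<alpha>\<^esub> x = \<one>\<^bsub>circ_grp G \<psi> \<alpha>\<^esub>"
  proof (rule bexI[of _ ?y])
    show "?y \<otimes>\<^bsub>circ_grp G \<psi> \<alpha>\<^esub> x = \<one>\<^bsub>circ_grp G \<psi> \<alpha>\<^esub>" using e by simp
    show "?y \<in> carrier (circ_grp G \<psi> \<alpha>)" using x by simp
  qed
qed

lemma circ_inv: assumes x: "x \<in> carrier G"
  shows "inv\<^bsub>circ_grp G \<psi> \<alpha>\<^esub> x = cnj G (fe (inv x)) (inv x)"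
proof (rule group.inv_equality[OF circ_group])
  show "cnj G (fe (inv x)) (inv x) \<otimes>\<^bsub>circ_grp G \<psi> \<alpha>\<^esub> x = \<one>\<^bsub>circ_grp G \<psi> \<alpha>\<^esub>"
    using x by (simp add: circ_eq cnj_fe_cnj cnj_mult[symmetric])
  show "x \<in> carrier (circ_grp G \<psi> \<alpha>)" using x by simp
  show "cnj G (fe (inv x)) (inv x) \<in> carrier (circ_grp G \<psi> \<alpha>)" using x by simp
qed

end

locale two_endo = E1: endo G \<psi>1 \<alpha>1 + E2: endo G \<psi>2 \<alpha>2
  for G :: "('a, 'b) monoid_scheme" (structure) and \<psi>1 \<alpha>1 \<psi>2 \<alpha>2 +
  assumes cross: "\<forall>a\<in>carrier G. \<forall>b\<in>carrier G. commut G (\<psi>1 a) (\<psi>2 b) \<in> center G"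
begin

lemma cross_comm:
  assumes x: "x \<in> carrier G" and y: "y \<in> carrier G" and w: "w \<in> carrier G"
  shows "cnj G (E1.fe x) (cnj G (E2.fe y) w) = cnj G (E2.fe y) (cnj G (E1.fe x) w)"
  using E1.cnj_commute[of "E1.fe x" "E2.fe y" w] cross E1.expr_closed[OF E1.alpha] E1.expr_closed[OF E2.alpha] x y w by simp

lemma brace:
  assumes a: "a \<in> carrier G" and b: "b \<in> carrier G" and c: "c \<in> carrier G"
  shows "circ G \<psi>2 \<alpha>2 a (circ G \<psi>1 \<alpha>1 b c) =
    circ G \<psi>1 \<alpha>1 (circ G \<psi>2 \<alpha>2 a b) (circ G \<psi>1 \<alpha>1 (inv\<^bsub>circ_grp G \<psi>1 \<alpha>1\<^esub> a) (circ G \<psi>2 \<alpha>2 a c))"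
proof -
  let ?u = "E1.fe" and ?v = "E2.fe"
  have Y: "circ G \<psi>1 \<alpha>1 (inv\<^bsub>circ_grp G \<psi>1 \<alpha>1\<^esub> a) (circ G \<psi>2 \<alpha>2 a c) = cnj G (?u (inv a)) (cnj G (?v a) c)"
  proof -
    have "circ G \<psi>1 \<alpha>1 (inv\<^bsub>circ_grp G \<psi>1 \<alpha>1\<^esub> a) (circ G \<psi>2 \<alpha>2 a c)
       = cnj G (?u (inv a)) (inv a) \<otimes> cnj G (?u (inv a)) (a \<otimes> cnj G (?v a) c)"
      using a c by (simp add: E1.circ_inv E1.circ_eq E2.circ_eq E1.cnj_fe_cnj)
    also have "\<dots> = cnj G (?u (inv a)) (inv a \<otimes> (a \<otimes> cnj G (?v a) c))"
      using a c by (simp add: E1.cnj_mult)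
    also have "\<dots> = cnj G (?u (inv a)) (cnj G (?v a) c)"
      using a c by (simp add: E1.inv_cancel_left')
    finally show ?thesis .
  qed
  have "circ G \<psi>1 \<alpha>1 (circ G \<psi>2 \<alpha>2 a b) (cnj G (?u (inv a)) (cnj G (?v a) c))
     = (a \<otimes> cnj G (?v a) b) \<otimes> cnj G (?u a) (cnj G (?u b) (cnj G (?u (inv a)) (cnj G (?v a) c)))"
    using a b c by (simp add: E1.circ_eq E2.circ_eq E1.cnj_fe_mult E1.cnj_fe_cnj)
  also have "\<dots> = (a \<otimes> cnj G (?v a) b) \<otimes> cnj G (?u a) (cnj G (?u (inv a)) (cnj G (?u b) (cnj G (?v a) c)))"
    using a b c E1.fe_comm[of b "inv a" "cnj G (?v a) c"] by simp
  also have "\<dots> = (a \<otimes> cnj G (?v a) b) \<otimes> cnj G (?u b) (cnj G (?v a) c)"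
    using a b c E1.cnj_fe_inv2[of a "cnj G (?u b) (cnj G (?v a) c)"] by simp
  also have "\<dots> = (a \<otimes> cnj G (?v a) b) \<otimes> cnj G (?v a) (cnj G (?u b) c)"
    using a b c cross_comm[of b a c] by simp
  also have "\<dots> = circ G \<psi>2 \<alpha>2 a (circ G \<psi>1 \<alpha>1 b c)"
    using a b c by (simp add: E1.circ_eq E2.circ_eq E1.cnj_mult E1.m_assoc)
  finally show ?thesis using Y by simp
qed

end

definition Rg :: "'a monoid \<Rightarrow> 'a monoid \<Rightarrow> 'a \<times> 'a \<Rightarrow> 'a \<times> 'a" where
  "Rg A M p = (let a = inv\<^bsub>A\<^esub> (fst p) \<otimes>\<^bsub>A\<^esub> (fst p \<otimes>\<^bsub>M\<^esub> snd p)
               in (a, (inv\<^bsub>M\<^esub> a \<otimes>\<^bsub>M\<^esub> fst p) \<otimes>\<^bsub>M\<^esub> snd p))"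

definition opp :: "'a monoid \<Rightarrow> 'a monoid" where
  "opp A = A\<lparr>monoid.mult := (\<lambda>x y. y \<otimes>\<^bsub>A\<^esub> x)\<rparr>"

lemma opp_simps[simp]: "carrier (opp A) = carrier A" "one (opp A) = one A"
  "x \<otimes>\<^bsub>opp A\<^esub> y = y \<otimes>\<^bsub>A\<^esub> x"
  by (simp_all add: opp_def)

lemma opp_inv: "inv\<^bsub>opp A\<^esub> x = inv\<^bsub>A\<^esub> x"
  unfolding m_inv_def by (simp add: conj_commute)

lemma opp_group: assumes "group A" shows "group (opp A)"
proof -
  interpret A: group A by (rule assms)
  show ?thesis
  proof (rule groupI)
    show "\<And>x y. x \<in> carrier (opp A) \<Longrightarrow> y \<in> carrier (opp A) \<Longrightarrow> x \<otimes>\<^bsub>opp A\<^esub> y \<in> carrier (opp A)" by simp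
    show "\<one>\<^bsub>opp A\<^esub> \<in> carrier (opp A)" by simp
    show "\<And>x y z. x \<in> carrier (opp A) \<Longrightarrow> y \<in> carrier (opp A) \<Longrightarrow> z \<in> carrier (opp A) \<Longrightarrow>
      x \<otimes>\<^bsub>opp A\<^esub> y \<otimes>\<^bsub>opp A\<^esub> z = x \<otimes>\<^bsub>opp A\<^esub> (y \<otimes>\<^bsub>opp A\<^esub> z)" by (simp add: A.m_assoc)
    show "\<And>x. x \<in> carrier (opp A) \<Longrightarrow> \<one>\<^bsub>opp A\<^esub> \<otimes>\<^bsub>opp A\<^esub> x = x" by simp
    show "\<And>x. x \<in> carrier (opp A) \<Longrightarrow> \<exists>y\<in>carrier (opp A). y \<otimes>\<^bsub>opp A\<^esub> x = \<one>\<^bsub>opp A\<^esub>"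
      by (metis A.inv_closed A.r_inv opp_simps)
  qed
qed

locale skb =
  fixes A :: "'a monoid" and M :: "'a monoid"
  assumes gA: "group A" and gM: "group M" and carrM: "carrier M = carrier A" and oneM: "one M = one A"
    and brace: "\<And>a b c. a \<in> carrier A \<Longrightarrow> b \<in> carrier A \<Longrightarrow> c \<in> carrier A \<Longrightarrow>
       a \<otimes>\<^bsub>M\<^esub> (b \<otimes>\<^bsub>A\<^esub> c) = (a \<otimes>\<^bsub>M\<^esub> b) \<otimes>\<^bsub>A\<^esub> (inv\<^bsub>A\<^esub> a \<otimes>\<^bsub>A\<^esub> (a \<otimes>\<^bsub>M\<^esub> c))"
begin

sublocale A: group A by (rule gA)
sublocale M: group M by (rule gM)

abbreviation "S \<equiv> carrier A"

lemma Mc[simp]: "x \<in> S \<Longrightarrow> y \<in> S \<Longrightarrow> x \<otimes>\<^bsub>M\<^esub> y \<in> S"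
  using M.m_closed carrM by auto
lemma Mic[simp]: "x \<in> S \<Longrightarrow> inv\<^bsub>M\<^esub> x \<in> S"
  using M.inv_closed carrM by auto
lemma M1[simp]: "x \<in> S \<Longrightarrow> x \<otimes>\<^bsub>M\<^esub> \<one>\<^bsub>A\<^esub> = x" "x \<in> S \<Longrightarrow> \<one>\<^bsub>A\<^esub> \<otimes>\<^bsub>M\<^esub> x = x"
  "x \<in> S \<Longrightarrow> x \<otimes>\<^bsub>M\<^esub> inv\<^bsub>M\<^esub> x = \<one>\<^bsub>A\<^esub>" "x \<in> S \<Longrightarrow> inv\<^bsub>M\<^esub> x \<otimes>\<^bsub>M\<^esub> x = \<one>\<^bsub>A\<^esub>"
  using carrM oneM M.r_one M.l_one M.r_inv M.l_inv by metis+
lemma Massoc: "x \<in> S \<Longrightarrow> y \<in> S \<Longrightarrow> z \<in> S \<Longrightarrow> (x \<otimes>\<^bsub>M\<^esub> y) \<otimes>\<^bsub>M\<^esub> z = x \<otimes>\<^bsub>M\<^esub> (y \<otimes>\<^bsub>M\<^esub> z)"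
  using M.m_assoc carrM by auto
lemma Mcanc[simp]: "x \<in> S \<Longrightarrow> y \<in> S \<Longrightarrow> inv\<^bsub>M\<^esub> x \<otimes>\<^bsub>M\<^esub> (x \<otimes>\<^bsub>M\<^esub> y) = y"
  "x \<in> S \<Longrightarrow> y \<in> S \<Longrightarrow> x \<otimes>\<^bsub>M\<^esub> (inv\<^bsub>M\<^esub> x \<otimes>\<^bsub>M\<^esub> y) = y"
  by (simp_all add: Massoc[symmetric])
lemma Mcanc2[simp]:
  "x \<in> S \<Longrightarrow> y \<in> S \<Longrightarrow> (y \<otimes>\<^bsub>M\<^esub> inv\<^bsub>M\<^esub> x) \<otimes>\<^bsub>M\<^esub> x = y"
  "x \<in> S \<Longrightarrow> y \<in> S \<Longrightarrow> (y \<otimes>\<^bsub>M\<^esub> x) \<otimes>\<^bsub>M\<^esub> inv\<^bsub>M\<^esub> x = y"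
  by (simp_all add: Massoc)
lemma Minv_inv[simp]: "x \<in> S \<Longrightarrow> inv\<^bsub>M\<^esub> (inv\<^bsub>M\<^esub> x) = x"
  using M.inv_inv carrM by auto
lemma Mlcancel: "x \<in> S \<Longrightarrow> y \<in> S \<Longrightarrow> z \<in> S \<Longrightarrow> x \<otimes>\<^bsub>M\<^esub> y = x \<otimes>\<^bsub>M\<^esub> z \<Longrightarrow> y = z"
  by (metis M.l_cancel carrM)

lemma Acanc[simp]: "x \<in> S \<Longrightarrow> y \<in> S \<Longrightarrow> inv\<^bsub>A\<^esub> x \<otimes>\<^bsub>A\<^esub> (x \<otimes>\<^bsub>A\<^esub> y) = y"
  "x \<in> S \<Longrightarrow> y \<in> S \<Longrightarrow> x \<otimes>\<^bsub>A\<^esub> (inv\<^bsub>A\<^esub> x \<otimes>\<^bsub>A\<^esub> y) = y"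
  by (simp_all add: A.m_assoc[symmetric])

lemmas Asimps = A.m_assoc A.inv_mult_group

definition lam where "lam a b = inv\<^bsub>A\<^esub> a \<otimes>\<^bsub>A\<^esub> (a \<otimes>\<^bsub>M\<^esub> b)"

lemma lam_closed[simp]: "a \<in> S \<Longrightarrow> b \<in> S \<Longrightarrow> lam a b \<in> S"
  by (simp add: lam_def)

lemma mul_decomp: "a \<in> S \<Longrightarrow> b \<in> S \<Longrightarrow> a \<otimes>\<^bsub>M\<^esub> b = a \<otimes>\<^bsub>A\<^esub> lam a b"
  by (simp add: lam_def)

lemma lam_add: "a \<in> S \<Longrightarrow> b \<in> S \<Longrightarrow> c \<in> S \<Longrightarrow> lam a (b \<otimes>\<^bsub>A\<^esub> c) = lam a b \<otimes>\<^bsub>A\<^esub> lam a c"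
  by (simp add: lam_def brace A.m_assoc)

lemma lam_one[simp]: "a \<in> S \<Longrightarrow> lam a \<one>\<^bsub>A\<^esub> = \<one>\<^bsub>A\<^esub>"
  by (simp add: lam_def)

lemma lam_one_left[simp]: "b \<in> S \<Longrightarrow> lam \<one>\<^bsub>A\<^esub> b = b"
  by (simp add: lam_def)

lemma lam_neg: assumes "a \<in> S" "b \<in> S" shows "lam a (inv\<^bsub>A\<^esub> b) = inv\<^bsub>A\<^esub> (lam a b)"
proof -
  have "lam a (inv\<^bsub>A\<^esub> b) \<otimes>\<^bsub>A\<^esub> lam a b = \<one>\<^bsub>A\<^esub>"
    using assms lam_add[of a "inv\<^bsub>A\<^esub> b" b] by simp
  then show ?thesis using A.inv_equality assms by simp
qed

lemma lam_comp: assumes a: "a \<in> S" and b: "b \<in> S" and c: "c \<in> S"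
  shows "lam (a \<otimes>\<^bsub>M\<^esub> b) c = lam a (lam b c)"
proof -
  have "(a \<otimes>\<^bsub>M\<^esub> b) \<otimes>\<^bsub>A\<^esub> lam (a \<otimes>\<^bsub>M\<^esub> b) c = (a \<otimes>\<^bsub>M\<^esub> b) \<otimes>\<^bsub>M\<^esub> c"
    by (rule mul_decomp[symmetric]) (use a b c in auto)
  also have "\<dots> = a \<otimes>\<^bsub>M\<^esub> (b \<otimes>\<^bsub>A\<^esub> lam b c)"
    using a b c by (simp add: Massoc mul_decomp[of b c])
  also have "\<dots> = (a \<otimes>\<^bsub>M\<^esub> b) \<otimes>\<^bsub>A\<^esub> lam a (lam b c)"
    using a b c by (unfold lam_def[of a "lam b c"]) (rule brace; simp)
  finally show ?thesis using A.l_cancel[of "a \<otimes>\<^bsub>M\<^esub> b" "lam (a \<otimes>\<^bsub>M\<^esub> b) c" "lam a (lam b c)"] a b c by simp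
qed

lemma lam_minv[simp]: "a \<in> S \<Longrightarrow> lam a (inv\<^bsub>M\<^esub> a) = inv\<^bsub>A\<^esub> a"
  by (simp add: lam_def)

lemma keyK: assumes "c \<in> S" "w \<in> S" shows "inv\<^bsub>A\<^esub> (c \<otimes>\<^bsub>M\<^esub> w) \<otimes>\<^bsub>A\<^esub> c = lam c (inv\<^bsub>A\<^esub> w)"
proof -
  have "lam c (inv\<^bsub>A\<^esub> w) = inv\<^bsub>A\<^esub> (lam c w)" using assms by (rule lam_neg)
  also have "\<dots> = inv\<^bsub>A\<^esub> (c \<otimes>\<^bsub>M\<^esub> w) \<otimes>\<^bsub>A\<^esub> c" using assms by (simp add: lam_def A.inv_mult_group)
  finally show ?thesis by simp
qed

lemma Rg_eq: "Rg A M (g, h) = (lam g h, (inv\<^bsub>M\<^esub> (lam g h) \<otimes>\<^bsub>M\<^esub> g) \<otimes>\<^bsub>M\<^esub> h)"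
  by (simp add: Rg_def lam_def Let_def)

lemma Rg_closed: "g \<in> S \<Longrightarrow> h \<in> S \<Longrightarrow> fst (Rg A M (g, h)) \<in> S \<and> snd (Rg A M (g, h)) \<in> S"
  by (simp add: Rg_eq)

lemma Rg_prod: "g \<in> S \<Longrightarrow> h \<in> S \<Longrightarrow> fst (Rg A M (g, h)) \<otimes>\<^bsub>M\<^esub> snd (Rg A M (g, h)) = g \<otimes>\<^bsub>M\<^esub> h"
  by (simp add: Rg_eq Massoc)

end

context skb begin

definition phi :: "'a \<times> 'a \<times> 'a \<Rightarrow> 'a \<times> 'a \<times> 'a" where
  "phi t = (fst t, fst t \<otimes>\<^bsub>M\<^esub> fst (snd t), (fst t \<otimes>\<^bsub>M\<^esub> fst (snd t)) \<otimes>\<^bsub>M\<^esub> snd (snd t))"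

definition r12 :: "'a \<times> 'a \<times> 'a \<Rightarrow> 'a \<times> 'a \<times> 'a" where
  "r12 t = (inv\<^bsub>A\<^esub> (fst t) \<otimes>\<^bsub>A\<^esub> fst (snd t), fst (snd t), snd (snd t))"

definition r23 :: "'a \<times> 'a \<times> 'a \<Rightarrow> 'a \<times> 'a \<times> 'a" where
  "r23 t = (fst t, fst t \<otimes>\<^bsub>A\<^esub> inv\<^bsub>A\<^esub> (fst (snd t)) \<otimes>\<^bsub>A\<^esub> snd (snd t), snd (snd t))"

abbreviation "S3 \<equiv> S \<times> S \<times> S"

lemma phi_S3: "t \<in> S3 \<Longrightarrow> phi t \<in> S3"
  by (auto simp: phi_def)

lemma phi_inj: assumes "t \<in> S3" "t' \<in> S3" "phi t = phi t'" shows "t = t'"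
proof -
  obtain x y z where t: "t = (x, y, z)" by (cases t) auto
  obtain x' y' z' where t': "t' = (x', y', z')" by (cases t') auto
  have xs: "x \<in> S" "y \<in> S" "z \<in> S" "x' \<in> S" "y' \<in> S" "z' \<in> S" using assms t t' by auto
  have e1: "x = x'" and e2: "x \<otimes>\<^bsub>M\<^esub> y = x' \<otimes>\<^bsub>M\<^esub> y'"
    and e3: "(x \<otimes>\<^bsub>M\<^esub> y) \<otimes>\<^bsub>M\<^esub> z = (x' \<otimes>\<^bsub>M\<^esub> y') \<otimes>\<^bsub>M\<^esub> z'"
    using assms(3) t t' by (auto simp: phi_def)
  have "y = y'" using Mlcancel[of x y y'] e1 e2 xs by simp
  moreover have "z = z'" using Mlcancel[of "x \<otimes>\<^bsub>M\<^esub> y" z z'] e2 e3 xs by simp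
  ultimately show ?thesis using t t' e1 by simp
qed

lemma ybe_r: assumes "x \<in> S" "P \<in> S" "Q \<in> S"
  shows "r12 (r23 (r12 (x, P, Q))) = r23 (r12 (r23 (x, P, Q)))"
  using assms by (simp add: r12_def r23_def Asimps)

lemma R12_phi: assumes t: "t \<in> S3"
  shows "R12 (Rg A M) t \<in> S3 \<and> phi (R12 (Rg A M) t) = r12 (phi t)"
proof -
  obtain x y z where tt: "t = (x, y, z)" by (cases t) auto
  have xs: "x \<in> S" "y \<in> S" "z \<in> S" using t tt by auto
  have c: "fst (Rg A M (x, y)) \<in> S" "snd (Rg A M (x, y)) \<in> S" using Rg_closed xs by auto
  have p: "fst (Rg A M (x, y)) \<otimes>\<^bsub>M\<^esub> snd (Rg A M (x, y)) = x \<otimes>\<^bsub>M\<^esub> y" using Rg_prod xs by auto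
  have f: "fst (Rg A M (x, y)) = inv\<^bsub>A\<^esub> x \<otimes>\<^bsub>A\<^esub> (x \<otimes>\<^bsub>M\<^esub> y)" by (simp add: Rg_eq lam_def)
  show ?thesis using c p f xs tt by (simp add: R12_def phi_def r12_def)
qed

lemma R23_phi: assumes t: "t \<in> S3"
  shows "R23 (Rg A M) t \<in> S3 \<and> phi (R23 (Rg A M) t) = r23 (phi t)"
proof -
  obtain x y z where tt: "t = (x, y, z)" by (cases t) auto
  have xs: "x \<in> S" "y \<in> S" "z \<in> S" using t tt by auto
  have c: "fst (Rg A M (y, z)) \<in> S" "snd (Rg A M (y, z)) \<in> S" using Rg_closed xs by auto
  have p: "fst (Rg A M (y, z)) \<otimes>\<^bsub>M\<^esub> snd (Rg A M (y, z)) = y \<otimes>\<^bsub>M\<^esub> z" using Rg_prod xs by auto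
  have f: "fst (Rg A M (y, z)) = lam y z" by (simp add: Rg_eq)
  have q: "(x \<otimes>\<^bsub>M\<^esub> fst (Rg A M (y, z))) \<otimes>\<^bsub>M\<^esub> snd (Rg A M (y, z)) = (x \<otimes>\<^bsub>M\<^esub> y) \<otimes>\<^bsub>M\<^esub> z"
    using c p xs by (simp add: Massoc)
  have ly: "lam y z = inv\<^bsub>A\<^esub> y \<otimes>\<^bsub>A\<^esub> (y \<otimes>\<^bsub>M\<^esub> z)" by (simp add: lam_def)
  have "x \<otimes>\<^bsub>M\<^esub> lam y z = x \<otimes>\<^bsub>A\<^esub> lam x (lam y z)"
    using xs by (intro mul_decomp) auto
  also have "\<dots> = x \<otimes>\<^bsub>A\<^esub> lam x (inv\<^bsub>A\<^esub> y \<otimes>\<^bsub>A\<^esub> (y \<otimes>\<^bsub>M\<^esub> z))" by (simp only: ly)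
  also have "\<dots> = x \<otimes>\<^bsub>A\<^esub> (inv\<^bsub>A\<^esub> (lam x y) \<otimes>\<^bsub>A\<^esub> lam x (y \<otimes>\<^bsub>M\<^esub> z))"
    using xs by (simp add: lam_add lam_neg)
  also have "\<dots> = x \<otimes>\<^bsub>A\<^esub> inv\<^bsub>A\<^esub> (x \<otimes>\<^bsub>M\<^esub> y) \<otimes>\<^bsub>A\<^esub> ((x \<otimes>\<^bsub>M\<^esub> y) \<otimes>\<^bsub>M\<^esub> z)"
    using xs by (simp add: lam_def Asimps Massoc)
  finally have m: "x \<otimes>\<^bsub>M\<^esub> fst (Rg A M (y, z)) = x \<otimes>\<^bsub>A\<^esub> inv\<^bsub>A\<^esub> (x \<otimes>\<^bsub>M\<^esub> y) \<otimes>\<^bsub>A\<^esub> ((x \<otimes>\<^bsub>M\<^esub> y) \<otimes>\<^bsub>M\<^esub> z)"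
    using f by simp
  show ?thesis using c q m xs tt by (simp add: R23_def phi_def r23_def mem_Times_iff)
qed

lemma ybe: "YBE_solution S (Rg A M)"
  unfolding YBE_solution_def
proof (intro conjI ballI)
  fix x y assume "x \<in> S" "y \<in> S"
  then show "fst (Rg A M (x, y)) \<in> S" "snd (Rg A M (x, y)) \<in> S" using Rg_closed by auto
next
  fix x y z assume xs: "x \<in> S" "y \<in> S" "z \<in> S"
  let ?R = "Rg A M" and ?t = "(x, y, z)"
  have t: "?t \<in> S3" using xs by simp
  have l1: "R12 ?R ?t \<in> S3" using R12_phi[OF t] by simp
  have l2: "R23 ?R (R12 ?R ?t) \<in> S3" using R23_phi[OF l1] by simp
  have l3: "R12 ?R (R23 ?R (R12 ?R ?t)) \<in> S3" using R12_phi[OF l2] by simp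
  have u1: "R23 ?R ?t \<in> S3" using R23_phi[OF t] by simp
  have u2: "R12 ?R (R23 ?R ?t) \<in> S3" using R12_phi[OF u1] by simp
  have u3: "R23 ?R (R12 ?R (R23 ?R ?t)) \<in> S3" using R23_phi[OF u2] by simp
  obtain x0 p0 q0 where pt: "phi ?t = (x0, p0, q0)" by (cases "phi ?t") auto
  have pts: "x0 \<in> S" "p0 \<in> S" "q0 \<in> S" using phi_S3[OF t] pt by auto
  have "phi (R12 ?R (R23 ?R (R12 ?R ?t))) = r12 (r23 (r12 (phi ?t)))"
    using R12_phi[OF l2] R23_phi[OF l1] R12_phi[OF t] by simp
  also have "\<dots> = r23 (r12 (r23 (phi ?t)))" using pt pts ybe_r by simp
  also have "\<dots> = phi (R23 ?R (R12 ?R (R23 ?R ?t)))"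
    using R23_phi[OF u2] R12_phi[OF u1] R23_phi[OF t] by simp
  finally show "R12 ?R (R23 ?R (R12 ?R ?t)) = R23 ?R (R12 ?R (R23 ?R ?t))"
    by (rule phi_inj[OF l3 u3])
qed

end

context skb begin

lemma lam_eq: "lam x y = inv\<^bsub>A\<^esub> x \<otimes>\<^bsub>A\<^esub> (x \<otimes>\<^bsub>M\<^esub> y)" by (simp add: lam_def)

lemma sigma_bij: assumes x: "x \<in> S" shows "bij_betw (\<lambda>y. fst (Rg A M (x, y))) S S"
proof (rule bij_betw_byWitness[where f' = "\<lambda>w. inv\<^bsub>M\<^esub> x \<otimes>\<^bsub>M\<^esub> (x \<otimes>\<^bsub>A\<^esub> w)"])
  show "\<forall>a\<in>S. inv\<^bsub>M\<^esub> x \<otimes>\<^bsub>M\<^esub> (x \<otimes>\<^bsub>A\<^esub> fst (Rg A M (x, a))) = a"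
    using x by (simp add: Rg_eq lam_eq)
  show "\<forall>a'\<in>S. fst (Rg A M (x, inv\<^bsub>M\<^esub> x \<otimes>\<^bsub>M\<^esub> (x \<otimes>\<^bsub>A\<^esub> a'))) = a'"
    using x by (simp add: Rg_eq lam_eq)
  show "(\<lambda>y. fst (Rg A M (x, y))) ` S \<subseteq> S" using x by (auto simp: Rg_eq)
  show "(\<lambda>w. inv\<^bsub>M\<^esub> x \<otimes>\<^bsub>M\<^esub> (x \<otimes>\<^bsub>A\<^esub> w)) ` S \<subseteq> S" using x by auto
qed

lemma lam_minv_left: assumes a: "a \<in> S" and e: "e \<in> S" shows "lam (inv\<^bsub>M\<^esub> a) (lam a e) = e"
  using lam_comp[of "inv\<^bsub>M\<^esub> a" a e] a e by simp

lemma tau_bij: assumes y: "y \<in> S" shows "bij_betw (\<lambda>x. snd (Rg A M (x, y))) S S"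
proof (rule bij_betw_byWitness[where f' = "\<lambda>b. (inv\<^bsub>M\<^esub> (inv\<^bsub>A\<^esub> (lam b (inv\<^bsub>A\<^esub> (inv\<^bsub>M\<^esub> y)))) \<otimes>\<^bsub>M\<^esub> b) \<otimes>\<^bsub>M\<^esub> inv\<^bsub>M\<^esub> y"])
  show "\<forall>x\<in>S. (inv\<^bsub>M\<^esub> (inv\<^bsub>A\<^esub> (lam (snd (Rg A M (x, y))) (inv\<^bsub>A\<^esub> (inv\<^bsub>M\<^esub> y)))) \<otimes>\<^bsub>M\<^esub> snd (Rg A M (x, y))) \<otimes>\<^bsub>M\<^esub> inv\<^bsub>M\<^esub> y = x"
  proof
    fix x assume x: "x \<in> S"
    define a where "a = lam x y"
    define b where "b = snd (Rg A M (x, y))"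
    define e where "e = lam b (inv\<^bsub>A\<^esub> (inv\<^bsub>M\<^esub> y))"
    have as: "a \<in> S" and bs: "b \<in> S" and es: "e \<in> S" using x y by (simp_all add: a_def b_def e_def Rg_eq)
    have bdef: "b = (inv\<^bsub>M\<^esub> a \<otimes>\<^bsub>M\<^esub> x) \<otimes>\<^bsub>M\<^esub> y" by (simp add: a_def b_def Rg_eq)
    have ab: "a \<otimes>\<^bsub>M\<^esub> b = x \<otimes>\<^bsub>M\<^esub> y" using x y as by (simp add: bdef Massoc)
    have xe: "x = (x \<otimes>\<^bsub>M\<^esub> y) \<otimes>\<^bsub>M\<^esub> inv\<^bsub>M\<^esub> y" using x y by simp
    have "a = inv\<^bsub>A\<^esub> ((x \<otimes>\<^bsub>M\<^esub> y) \<otimes>\<^bsub>M\<^esub> inv\<^bsub>M\<^esub> y) \<otimes>\<^bsub>A\<^esub> (x \<otimes>\<^bsub>M\<^esub> y)"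
      using x y by (simp add: a_def lam_eq)
    also have "\<dots> = lam (x \<otimes>\<^bsub>M\<^esub> y) (inv\<^bsub>A\<^esub> (inv\<^bsub>M\<^esub> y))" by (rule keyK) (use x y in auto)
    also have "\<dots> = lam a e" using ab as bs y by (simp add: e_def lam_comp[symmetric])
    finally have ae: "a = lam a e" .
    have "inv\<^bsub>A\<^esub> (inv\<^bsub>M\<^esub> a) = lam (inv\<^bsub>M\<^esub> a) a" using as by (simp add: lam_eq)
    also have "\<dots> = e" using lam_minv_left[OF as es] ae by simp
    finally have "inv\<^bsub>M\<^esub> a = inv\<^bsub>A\<^esub> e" using as es by (metis A.inv_inv Mic)
    hence "inv\<^bsub>M\<^esub> (inv\<^bsub>A\<^esub> e) = a" using as by (metis Minv_inv)
    then show "(inv\<^bsub>M\<^esub> (inv\<^bsub>A\<^esub> (lam (snd (Rg A M (x, y))) (inv\<^bsub>A\<^esub> (inv\<^bsub>M\<^esub> y)))) \<otimes>\<^bsub>M\<^esub> snd (Rg A M (x, y))) \<otimes>\<^bsub>M\<^esub> inv\<^bsub>M\<^esub> y = x"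
      using ab x y by (simp add: b_def[symmetric] e_def[symmetric])
  qed
  show "\<forall>b\<in>S. snd (Rg A M ((inv\<^bsub>M\<^esub> (inv\<^bsub>A\<^esub> (lam b (inv\<^bsub>A\<^esub> (inv\<^bsub>M\<^esub> y)))) \<otimes>\<^bsub>M\<^esub> b) \<otimes>\<^bsub>M\<^esub> inv\<^bsub>M\<^esub> y, y)) = b"
  proof
    fix b assume bs: "b \<in> S"
    define e where "e = lam b (inv\<^bsub>A\<^esub> (inv\<^bsub>M\<^esub> y))"
    define a0 where "a0 = inv\<^bsub>M\<^esub> (inv\<^bsub>A\<^esub> e)"
    define x0 where "x0 = (a0 \<otimes>\<^bsub>M\<^esub> b) \<otimes>\<^bsub>M\<^esub> inv\<^bsub>M\<^esub> y"
    have es: "e \<in> S" and a0s: "a0 \<in> S" and x0s: "x0 \<in> S" using bs y by (simp_all add: e_def a0_def x0_def)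
    have x0y: "x0 \<otimes>\<^bsub>M\<^esub> y = a0 \<otimes>\<^bsub>M\<^esub> b" using a0s bs y by (simp add: x0_def)
    have ee: "e = inv\<^bsub>A\<^esub> (inv\<^bsub>M\<^esub> a0)" using es by (simp add: a0_def)
    have "lam x0 y = inv\<^bsub>A\<^esub> ((a0 \<otimes>\<^bsub>M\<^esub> b) \<otimes>\<^bsub>M\<^esub> inv\<^bsub>M\<^esub> y) \<otimes>\<^bsub>A\<^esub> (a0 \<otimes>\<^bsub>M\<^esub> b)"
      by (simp add: lam_eq x0y) (simp add: x0_def)
    also have "\<dots> = lam (a0 \<otimes>\<^bsub>M\<^esub> b) (inv\<^bsub>A\<^esub> (inv\<^bsub>M\<^esub> y))" by (rule keyK) (use a0s bs y in auto)
    also have "\<dots> = lam a0 e" using a0s bs y by (simp add: e_def lam_comp)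
    also have "\<dots> = a0" using a0s by (simp add: ee lam_neg)
    finally have l: "lam x0 y = a0" .
    have "snd (Rg A M (x0, y)) = (inv\<^bsub>M\<^esub> a0 \<otimes>\<^bsub>M\<^esub> x0) \<otimes>\<^bsub>M\<^esub> y" by (simp add: Rg_eq l)
    also have "\<dots> = b" using a0s x0s bs y by (simp add: Massoc x0y)
    finally show "snd (Rg A M ((inv\<^bsub>M\<^esub> (inv\<^bsub>A\<^esub> (lam b (inv\<^bsub>A\<^esub> (inv\<^bsub>M\<^esub> y)))) \<otimes>\<^bsub>M\<^esub> b) \<otimes>\<^bsub>M\<^esub> inv\<^bsub>M\<^esub> y, y)) = b"
      by (simp add: x0_def a0_def e_def)
  qed
  show "(\<lambda>x. snd (Rg A M (x, y))) ` S \<subseteq> S" using y by (auto simp: Rg_eq)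
  show "(\<lambda>b. (inv\<^bsub>M\<^esub> (inv\<^bsub>A\<^esub> (lam b (inv\<^bsub>A\<^esub> (inv\<^bsub>M\<^esub> y)))) \<otimes>\<^bsub>M\<^esub> b) \<otimes>\<^bsub>M\<^esub> inv\<^bsub>M\<^esub> y) ` S \<subseteq> S"
    using y by auto
qed

lemma nondeg: "nondegenerate S (Rg A M)"
  unfolding nondegenerate_def using sigma_bij tau_bij by blast

lemma opp_skb: "skb (opp A) M"
proof (rule skb.intro)
  show "group (opp A)" by (rule opp_group[OF gA])
  show "group M" by (rule gM)
  show "carrier M = carrier (opp A)" using carrM by simp
  show "\<one>\<^bsub>M\<^esub> = \<one>\<^bsub>opp A\<^esub>" using oneM by simp
  fix a b c assume "a \<in> carrier (opp A)" "b \<in> carrier (opp A)" "c \<in> carrier (opp A)"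
  hence abc: "a \<in> S" "b \<in> S" "c \<in> S" by auto
  show "a \<otimes>\<^bsub>M\<^esub> (b \<otimes>\<^bsub>opp A\<^esub> c) =
       a \<otimes>\<^bsub>M\<^esub> b \<otimes>\<^bsub>opp A\<^esub> (inv\<^bsub>opp A\<^esub> a \<otimes>\<^bsub>opp A\<^esub> (a \<otimes>\<^bsub>M\<^esub> c))"
    using abc by (simp add: opp_inv brace A.m_assoc)
qed

end

context skb begin

lemma Rg_opp_eq: "Rg (opp A) M (g, h) =
   ((g \<otimes>\<^bsub>M\<^esub> h) \<otimes>\<^bsub>A\<^esub> inv\<^bsub>A\<^esub> g, (inv\<^bsub>M\<^esub> ((g \<otimes>\<^bsub>M\<^esub> h) \<otimes>\<^bsub>A\<^esub> inv\<^bsub>A\<^esub> g) \<otimes>\<^bsub>M\<^esub> g) \<otimes>\<^bsub>M\<^esub> h)"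
  by (simp add: Rg_def opp_inv Let_def)

lemma inv1: assumes x: "x \<in> S" and y: "y \<in> S" shows "Rg (opp A) M (Rg A M (x, y)) = (x, y)"
proof -
  obtain a b where R: "Rg A M (x, y) = (a, b)" by (cases "Rg A M (x, y)")
  have a: "a = inv\<^bsub>A\<^esub> x \<otimes>\<^bsub>A\<^esub> (x \<otimes>\<^bsub>M\<^esub> y)" using R by (simp add: Rg_eq lam_eq)
  have ab: "a \<in> S" "b \<in> S" using Rg_closed[OF x y] R by auto
  have p: "a \<otimes>\<^bsub>M\<^esub> b = x \<otimes>\<^bsub>M\<^esub> y" using Rg_prod[OF x y] R by simp
  have f: "(a \<otimes>\<^bsub>M\<^esub> b) \<otimes>\<^bsub>A\<^esub> inv\<^bsub>A\<^esub> a = x" using x y unfolding p by (simp add: a A.inv_mult_group A.m_assoc)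
  have s: "(inv\<^bsub>M\<^esub> x \<otimes>\<^bsub>M\<^esub> a) \<otimes>\<^bsub>M\<^esub> b = y" using x y ab by (simp add: Massoc p)
  show ?thesis using R f s by (simp add: Rg_opp_eq)
qed

lemma inv2: assumes x: "x \<in> S" and y: "y \<in> S" shows "Rg A M (Rg (opp A) M (x, y)) = (x, y)"
proof -
  interpret O: skb "opp A" M by (rule opp_skb)
  obtain a b where R: "Rg (opp A) M (x, y) = (a, b)" by (cases "Rg (opp A) M (x, y)")
  have a: "a = (x \<otimes>\<^bsub>M\<^esub> y) \<otimes>\<^bsub>A\<^esub> inv\<^bsub>A\<^esub> x" using R by (simp add: Rg_opp_eq)
  have ab: "a \<in> S" "b \<in> S" using O.Rg_closed[of x y] x y R by auto
  have p: "a \<otimes>\<^bsub>M\<^esub> b = x \<otimes>\<^bsub>M\<^esub> y" using O.Rg_prod[of x y] x y R by simp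
  have f: "inv\<^bsub>A\<^esub> a \<otimes>\<^bsub>A\<^esub> (a \<otimes>\<^bsub>M\<^esub> b) = x" using x y unfolding p by (simp add: a A.inv_mult_group A.m_assoc)
  have s: "(inv\<^bsub>M\<^esub> x \<otimes>\<^bsub>M\<^esub> a) \<otimes>\<^bsub>M\<^esub> b = y" using x y ab by (simp add: Massoc p)
  show ?thesis unfolding R by (simp only: Rg_def Let_def fst_conv snd_conv f s)
qed

lemma comm_imp_eq: assumes c: "\<forall>a\<in>S. \<forall>b\<in>S. a \<otimes>\<^bsub>A\<^esub> b = b \<otimes>\<^bsub>A\<^esub> a" and x: "x \<in> S" and y: "y \<in> S"
  shows "Rg (opp A) M (x, y) = Rg A M (x, y)"
proof -
  have "(x \<otimes>\<^bsub>M\<^esub> y) \<otimes>\<^bsub>A\<^esub> inv\<^bsub>A\<^esub> x = inv\<^bsub>A\<^esub> x \<otimes>\<^bsub>A\<^esub> (x \<otimes>\<^bsub>M\<^esub> y)" using c x y by simp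
  then show ?thesis by (simp add: Rg_opp_eq Rg_eq lam_eq)
qed

lemma invol_eq: assumes inv: "involutive S (Rg A M)" and x: "x \<in> S" and y: "y \<in> S"
  shows "Rg (opp A) M (x, y) = Rg A M (x, y)"
proof -
  obtain a b where R: "Rg A M (x, y) = (a, b)" by (cases "Rg A M (x, y)")
  have ab: "a \<in> S" "b \<in> S" using Rg_closed[OF x y] R by auto
  have "Rg A M (a, b) = (x, y)" using inv x y R unfolding involutive_def by metis
  hence "Rg (opp A) M (x, y) = Rg (opp A) M (Rg A M (a, b))" by simp
  also have "\<dots> = (a, b)" using inv1[OF ab] .
  finally show ?thesis using R by simp
qed

lemma invol_iff: "involutive S (Rg A M) \<longleftrightarrow> (\<forall>a\<in>S. \<forall>b\<in>S. a \<otimes>\<^bsub>A\<^esub> b = b \<otimes>\<^bsub>A\<^esub> a)"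
proof
  assume inv: "involutive S (Rg A M)"
  show "\<forall>a\<in>S. \<forall>b\<in>S. a \<otimes>\<^bsub>A\<^esub> b = b \<otimes>\<^bsub>A\<^esub> a"
  proof (intro ballI)
    fix a b assume a: "a \<in> S" and b: "b \<in> S"
    define x where "x = inv\<^bsub>A\<^esub> a"
    define y where "y = inv\<^bsub>M\<^esub> x \<otimes>\<^bsub>M\<^esub> b"
    have xs: "x \<in> S" "y \<in> S" using a b by (simp_all add: x_def y_def)
    have xy: "x \<otimes>\<^bsub>M\<^esub> y = b" using xs b by (simp add: y_def)
    have "fst (Rg (opp A) M (x, y)) = fst (Rg A M (x, y))" using invol_eq[OF inv xs] by simp
    hence "b \<otimes>\<^bsub>A\<^esub> inv\<^bsub>A\<^esub> x = inv\<^bsub>A\<^esub> x \<otimes>\<^bsub>A\<^esub> b" by (simp add: Rg_opp_eq Rg_eq lam_eq xy)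
    then show "a \<otimes>\<^bsub>A\<^esub> b = b \<otimes>\<^bsub>A\<^esub> a" using a by (simp add: x_def)
  qed
next
  assume c: "\<forall>a\<in>S. \<forall>b\<in>S. a \<otimes>\<^bsub>A\<^esub> b = b \<otimes>\<^bsub>A\<^esub> a"
  show "involutive S (Rg A M)" unfolding involutive_def
  proof (intro ballI)
    fix x y assume x: "x \<in> S" and y: "y \<in> S"
    obtain a b where R: "Rg A M (x, y) = (a, b)" by (cases "Rg A M (x, y)")
    have ab: "a \<in> S" "b \<in> S" using Rg_closed[OF x y] R by auto
    have "Rg A M (Rg A M (x, y)) = Rg (opp A) M (a, b)" using comm_imp_eq[OF c ab] R by simp
    also have "\<dots> = (x, y)" using inv1[OF x y] R by simp
    finally show "Rg A M (Rg A M (x, y)) = (x, y)" .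
  qed
qed

end

theorem corollary3p5:
  fixes G :: "('a, 'b) monoid_scheme"
    and \<psi> :: "nat \<Rightarrow> 'a \<Rightarrow> 'a"
    and t i j :: nat
    and \<alpha> \<beta> :: "(int \<times> ('a \<Rightarrow> 'a)) list"
    and R R' :: "'a \<times> 'a \<Rightarrow> 'a \<times> 'a"
  assumes "group G"
    and "\<not> comm_group G"
    and "\<forall>k \<in> {1..t}. \<psi> k \<in> hom G G"
    and "\<forall>k \<in> {1..t}. \<psi> k ` derived G (carrier G) \<subseteq> center G"
    and "\<forall>k \<in> {1..t}. \<forall>l \<in> {1..t}. \<forall>a \<in> carrier G. \<forall>b \<in> carrier G.
           commut G (\<psi> k a) (\<psi> l b) \<in> center G"
    and "i \<in> {1..t}" and "j \<in> {1..t}"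
    and "\<alpha> \<in> exprs G" and "\<beta> \<in> exprs G"
    and "\<And>g h. R (g, h) =
          (let ci = circ G (\<psi> i) \<alpha>; cj = circ G (\<psi> j) \<beta>;
               tl = inv\<^bsub>circ_grp G (\<psi> i) \<alpha>\<^esub> g;
               a = ci tl (cj g h)
           in (a, cj (cj (inv\<^bsub>circ_grp G (\<psi> j) \<beta>\<^esub> a) g) h))"
    and "\<And>g h. R' (g, h) =
          (let ci = circ G (\<psi> i) \<alpha>; cj = circ G (\<psi> j) \<beta>;
               tl = inv\<^bsub>circ_grp G (\<psi> i) \<alpha>\<^esub> g;
               a = ci (cj g h) tl
           in (a, cj (cj (inv\<^bsub>circ_grp G (\<psi> j) \<beta>\<^esub> a) g) h))"
  shows "YBE_solution (carrier G) R \<and> nondegenerate (carrier G) R \<and>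
         YBE_solution (carrier G) R' \<and> nondegenerate (carrier G) R' \<and>
         (\<forall>x \<in> carrier G. \<forall>y \<in> carrier G. R' (R (x, y)) = (x, y) \<and> R (R' (x, y)) = (x, y)) \<and>
         (involutive (carrier G) R \<longleftrightarrow> comm_group (circ_grp G (\<psi> i) \<alpha>)) \<and>
         (involutive (carrier G) R \<longrightarrow> (\<forall>x \<in> carrier G. \<forall>y \<in> carrier G. R' (x, y) = R (x, y)))"
proof -
  have g: "group G" by (rule assms(1))
  have Ei: "endo G (\<psi> i) \<alpha>"
    unfolding endo_def endo_axioms_def using assms g by auto
  have Ej: "endo G (\<psi> j) \<beta>"
    unfolding endo_def endo_axioms_def using assms g by auto
  have TE: "two_endo G (\<psi> i) \<alpha> (\<psi> j) \<beta>"
    unfolding two_endo_def two_endo_axioms_def using Ei Ej assms by auto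
  let ?A = "circ_grp G (\<psi> i) \<alpha>" and ?M = "circ_grp G (\<psi> j) \<beta>"
  have SK: "skb ?A ?M"
  proof (rule skb.intro)
    show "group ?A" by (rule endo.circ_group[OF Ei])
    show "group ?M" by (rule endo.circ_group[OF Ej])
    show "carrier ?M = carrier ?A" by simp
    show "\<one>\<^bsub>?M\<^esub> = \<one>\<^bsub>?A\<^esub>" by simp
    fix a b c assume "a \<in> carrier ?A" "b \<in> carrier ?A" "c \<in> carrier ?A"
    then show "a \<otimes>\<^bsub>?M\<^esub> (b \<otimes>\<^bsub>?A\<^esub> c) = (a \<otimes>\<^bsub>?M\<^esub> b) \<otimes>\<^bsub>?A\<^esub> (inv\<^bsub>?A\<^esub> a \<otimes>\<^bsub>?A\<^esub> (a \<otimes>\<^bsub>?M\<^esub> c))"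
      using two_endo.brace[OF TE] by simp
  qed
  interpret S: skb ?A ?M by (rule SK)
  interpret O: skb "opp ?A" ?M by (rule S.opp_skb)
  have RA: "R = Rg ?A ?M"
  proof
    fix p :: "'a \<times> 'a" obtain g h where p: "p = (g, h)" by (cases p)
    show "R p = Rg ?A ?M p" unfolding p assms(10) by (simp add: Rg_def Let_def)
  qed
  have RB: "R' = Rg (opp ?A) ?M"
  proof
    fix p :: "'a \<times> 'a" obtain g h where p: "p = (g, h)" by (cases p)
    show "R' p = Rg (opp ?A) ?M p" unfolding p assms(11) by (simp add: Rg_def Let_def opp_inv)
  qed
  have cg: "comm_group ?A \<longleftrightarrow> (\<forall>a\<in>carrier ?A. \<forall>b\<in>carrier ?A. a \<otimes>\<^bsub>?A\<^esub> b = b \<otimes>\<^bsub>?A\<^esub> a)"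
  proof
    assume "comm_group ?A"
    then interpret CA: comm_group ?A .
    show "\<forall>a\<in>carrier ?A. \<forall>b\<in>carrier ?A. a \<otimes>\<^bsub>?A\<^esub> b = b \<otimes>\<^bsub>?A\<^esub> a" using CA.m_comm by blast
  next
    assume "\<forall>a\<in>carrier ?A. \<forall>b\<in>carrier ?A. a \<otimes>\<^bsub>?A\<^esub> b = b \<otimes>\<^bsub>?A\<^esub> a"
    then show "comm_group ?A" using group.group_comm_groupI[OF S.gA] by blast
  qed
  have y1: "YBE_solution (carrier G) R" using S.ybe RA by simp
  have y2: "YBE_solution (carrier G) R'" using O.ybe RB by simp
  have n1: "nondegenerate (carrier G) R" using S.nondeg RA by simp
  have n2: "nondegenerate (carrier G) R'" using O.nondeg RB by simp
  have iv: "\<forall>x \<in> carrier G. \<forall>y \<in> carrier G. R' (R (x, y)) = (x, y) \<and> R (R' (x, y)) = (x, y)"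
    using S.inv1 S.inv2 RA RB by simp
  have ii: "involutive (carrier G) R \<longleftrightarrow> comm_group ?A"
    using S.invol_iff cg RA by simp
  have ie: "involutive (carrier G) R \<longrightarrow> (\<forall>x \<in> carrier G. \<forall>y \<in> carrier G. R' (x, y) = R (x, y))"
    using S.invol_eq RA RB by simp
  show ?thesis using y1 y2 n1 n2 iv ii ie by blast
qed

end
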